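(* Let $S=(0,1)$. Let $\{\lambda_n\}_{n\geq 1}$ be i.i.d. random variables, each uniformly distributed on $(3.87,4)$, and let $X_0$ be an $S$-valued random variable independent of the $\lambda_n$'s. Define the Markov process $X_{n+1}=\lambda_{n+1}X_n(1-X_n)$ for $n\geq 0$, with one-step transition probability $p(x,A)=\mathrm{Prob}(X_1\in A\mid X_0=x)=\mathrm{Prob}(\lambda_1 x(1-x)\in A)$. Let $\lambda_{\min}=3.87$, let $A_0=\left(1-\frac{1}{\lambda_{\min}},\,1-\frac14\right)$, and let $\phi$ be normalized Lebesgue measure on $A_0$, i.e. $\phi(A)=\frac{1}{|A_0|}\,\mathrm{Leb}(A\cap A_0)$ for measurable $A$, where $|A_0|$ is the length of $A_0$. Then there exists $c>0$ such that for all $x\in A_0$ and all measurable $A\subset(0,1)$, $p(x,A)\geq c\,\phi(A)$.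
   Context: $A_0$ is the set of fixed points $1-1/\lambda$ of the deterministic logistic maps $x\mapsto \lambda x(1-x)$ for $\lambda\in(3.87,4)$. *)

theory Defs
  imports "HOL-Probability.Probability"
begin

definition lambda_min :: real where "lambda_min = 3.87"
definition lambda_max :: real where "lambda_max = 4"

definition lam_dist :: "real measure" where
  "lam_dist = uniform_measure lborel {lambda_min<..<lambda_max}"

definition trans_prob :: "real \<Rightarrow> real set \<Rightarrow> real" where
  "trans_prob x A = measure lam_dist {l. l * x * (1 - x) \<in> A}"

definition A0 :: "real set" where
  "A0 = {1 - 1 / lambda_min <..< 1 - 1 / 4}"

definition phi :: "real set \<Rightarrow> real" where
  "phi A = measure lborel (A \<inter> A0) / measure lborel A0"

end

theory Submission
  imports Defs
begin

lemma scale_meas: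
  fixes q :: real
  assumes q: "q > 0" and B: "B \<in> sets borel"
  shows "measure lborel {l. l * q \<in> B} = measure lborel B / q"
proof -
  have "measure lborel {l. l * q \<in> B} = measure (distr lborel borel ((*) q)) B"
    using B by (subst measure_distr) (auto simp: mult.commute vimage_def)
  also have "\<dots> = measure (density lborel (\<lambda>_. ennreal (inverse \<bar>q\<bar>))) B"
    using q by (subst lborel_distr_mult) auto
  also have "\<dots> = inverse q * measure lborel B"
    using q B by (subst measure_density_const) auto
  finally show ?thesis by (simp add: field_simps)
qed

theorem mainTheorem2:
  shows "\<exists>c>0. \<forall>x\<in>A0. \<forall>A\<in>sets borel. A \<subseteq> {0<..<1} \<longrightarrow>
           trans_prob x A \<ge> c * phi A"
proof (intro exI[of _ "measure lborel A0"] conjI ballI impI)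
  have mA0: "measure lborel A0 = 1/lambda_min - 1/4"
    by (simp add: A0_def lambda_min_def)
  show "measure lborel A0 > 0" unfolding mA0 lambda_min_def by simp
  fix x and A :: "real set" assume x: "x \<in> A0" and A: "A \<in> sets borel" and "A \<subseteq> {0<..<1}"
  define q where "q = x * (1 - x)"
  define B where "B = A \<inter> A0"
  have Bb: "B \<in> sets borel" using A by (simp add: B_def A0_def)
  have x1: "x > 1 - 1/lambda_min" "x < 3/4" using x by (auto simp: A0_def)
  have x2: "x > 1 - 1/3.87" using x1 by (simp add: lambda_min_def)
  have qpos: "q > 0" and qle: "q \<le> 1/4"
  proof -
    have "(x - 1/2)^2 \<ge> 0" by simp
    then show "q > 0" "q \<le> 1/4" using x1(2) x2 by (auto simp: q_def algebra_simps power2_eq_square)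
  qed
  have q1: "lambda_min * q \<le> 1 - 1/lambda_min"
  proof -
    have "(x - (1 - 1/3.87)) * (1 - x - (1 - 1/3.87)) \<le> 0"
      using x1(2) x2 by (intro mult_nonneg_nonpos) auto
    then show ?thesis by (simp add: field_simps q_def lambda_min_def)
  qed
  have q2: "4 * q \<ge> 3/4"
  proof -
    have "(2*x - 1/2) * (3/2 - 2*x) \<ge> 0"
      using x1(2) x2 by (intro mult_nonneg_nonneg) auto
    then show ?thesis by (simp add: algebra_simps q_def)
  qed
  define I where "I = {lambda_min<..<lambda_max}"
  define S where "S = {l. l * q \<in> B}"
  have Sb: "S \<in> sets borel" unfolding S_def using Bb by measurable
  have SI: "S \<subseteq> I"
  proof
    fix l assume "l \<in> S"
    then have "l * q \<in> A0" by (auto simp: S_def B_def)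
    then have "l * q > 1 - 1/lambda_min" "l * q < 3/4" by (auto simp: A0_def)
    then have "l * q > lambda_min * q" "l * q < 4 * q" using q1 q2 by linarith+
    then show "l \<in> I" using qpos by (auto simp: I_def lambda_max_def)
  qed
  have mI: "measure lborel I = lambda_max - lambda_min" "emeasure lborel I = ennreal (lambda_max - lambda_min)"
    by (auto simp: I_def lambda_max_def lambda_min_def)
  have Tb: "{l. l * x * (1 - x) \<in> A} \<in> sets borel" using A by measurable
  have "trans_prob x A = measure lborel (I \<inter> {l. l * x * (1 - x) \<in> A}) / (lambda_max - lambda_min)"
  proof -
    have "emeasure lborel I \<noteq> 0" "emeasure lborel I \<noteq> \<infinity>"
      unfolding mI(2) by (simp_all add: lambda_max_def lambda_min_def)
    then have "measure lam_dist {l. l * x * (1 - x) \<in> A} = measure lborel (I \<inter> {l. l * x * (1 - x) \<in> A}) / measure lborel I"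
      unfolding lam_dist_def I_def[symmetric] using Tb by (subst measure_uniform_measure) auto
    then show ?thesis unfolding trans_prob_def mI(1) .
  qed
  also have "\<dots> \<ge> measure lborel S / (lambda_max - lambda_min)"
  proof -
    have "S \<subseteq> I \<inter> {l. l * x * (1 - x) \<in> A}" using SI by (auto simp: S_def B_def q_def mult.assoc)
    then have "measure lborel S \<le> measure lborel (I \<inter> {l. l * x * (1 - x) \<in> A})"
    proof (rule measure_mono_fmeasurable)
      show "S \<in> sets lborel" using Sb by simp
      have Ib: "I \<in> sets borel" by (simp add: I_def)
      have "emeasure lborel (I \<inter> {l. l * x * (1 - x) \<in> A}) \<le> emeasure lborel I"
        by (rule emeasure_mono) (use Ib in simp_all)
      also have "\<dots> < \<infinity>" unfolding mI(2) by simp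
      finally show "I \<inter> {l. l * x * (1 - x) \<in> A} \<in> fmeasurable lborel"
        using Ib Tb by (intro fmeasurableI) simp_all
    qed
    then show ?thesis by (intro divide_right_mono) (auto simp: lambda_max_def lambda_min_def)
  qed
  finally have "trans_prob x A \<ge> measure lborel B / q / (lambda_max - lambda_min)"
    using scale_meas[OF qpos Bb] by (simp add: S_def)
  moreover have "measure lborel B / q / (lambda_max - lambda_min) \<ge> measure lborel B"
  proof -
    have d: "q * (lambda_max - lambda_min) \<le> 1" "q * (lambda_max - lambda_min) > 0"
      using qle qpos by (simp_all add: lambda_max_def lambda_min_def)
    have "measure lborel B * (q * (lambda_max - lambda_min)) \<le> measure lborel B"
      using d(1) by (rule mult_left_le) simp
    then have "measure lborel B \<le> measure lborel B / (q * (lambda_max - lambda_min))"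
      using d(2) by (simp add: le_divide_eq)
    then show ?thesis by (simp add: divide_divide_eq_left)
  qed
  moreover have "measure lborel A0 * phi A = measure lborel B"
    unfolding phi_def B_def using mA0 by (simp add: lambda_min_def)
  ultimately show "trans_prob x A \<ge> measure lborel A0 * phi A" by simp
qed

end
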